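(* Let $s>0$ and $0<\epsilon<\min\{s,1\}$, and let $\rho,\lambda\in(1,\infty)$, $\sigma\in(1/2,1)$ be chosen such that $1-\sigma=\frac{1}{\rho}+\frac{1}{\lambda}$, $\rho(2\sigma-1-\epsilon)>1$ and $\lambda\le 2/(1-s)^+$. Define the norm $\|u\|_{\mathcal{H}^s}:=\|u\|_{H^s}+\|\hat{u}\|_{L^\lambda(-1,1)}$. For the Korteweg–de Vries equation $u_t+u_{xxx}\pm(u^2)_x=0$ on $\mathbb{R}$, with phase $\Phi(\xi,\xi_1,\xi_2)=3\xi\xi_1\xi_2$ and symbol $m=\xi$, consider the bilinear operator $$\mathcal{F}[T^{\alpha,M}(u_1,u_2)](\xi)=\int_{\substack{\xi_1+\xi_2=\xi\\|\Phi-\alpha|<M}}\xi\,\hat{u}_1(\xi_1)\hat{u}_2(\xi_2)\,d\xi_1,\qquad \alpha,M\in\mathbb{R}.$$ Then for any $u_1,u_2\in\mathcal{H}^s$, $$\|T^{\alpha,M}(u_1,u_2)\|_{\mathcal{H}^s}\lesssim \langle M\rangle^{1/2}\|u_1\|_{\mathcal{H}^s}\|u_2\|_{\mathcal{H}^s},$$ where $\langle M\rangle=(1+M^2)^{1/2}$.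
   Context: This is used to prove nonlinear smoothing for KdV on $H^s(\mathbb{R})\cap L^2(|x|^{s/2}dx)$ of any order $\epsilon<\min\{s,1\}$, $s>0$. The auxiliary norm $\mathcal{H}^s$ (with the $L^\lambda(-1,1)$ control of the Fourier transform at low frequencies) is introduced because the plain $H^s$ norm is not enough for the phase-weighted bound; for data in $H^s\cap L^2(|x|^{s/2}dx)$ the profile's Fourier transform lies in $H^{s/2}\hookrightarrow L^\lambda$. *)

theory Defs
  imports "HOL-Analysis.Analysis"
begin

text \<open>All objects are represented on the Fourier side: a function u is
  represented by its Fourier transform f = u-hat :: real \<Rightarrow> complex.\<close>

definition Hs_sq :: "real \<Rightarrow> (real \<Rightarrow> complex) \<Rightarrow> ennreal" where
  "Hs_sq s f = (\<integral>\<^sup>+ \<xi>. ennreal ((1 + \<xi>\<^sup>2) powr s * (cmod (f \<xi>))\<^sup>2) \<partial>lborel)"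

definition Llam_pow :: "real \<Rightarrow> (real \<Rightarrow> complex) \<Rightarrow> ennreal" where
  "Llam_pow lam f = (\<integral>\<^sup>+ \<xi>\<in>{-1<..<1}. ennreal (cmod (f \<xi>) powr lam) \<partial>lborel)"

definition in_calH :: "real \<Rightarrow> real \<Rightarrow> (real \<Rightarrow> complex) \<Rightarrow> bool" where
  "in_calH s lam f \<longleftrightarrow> f \<in> borel_measurable lborel \<and> Hs_sq s f < \<infinity> \<and> Llam_pow lam f < \<infinity>"

definition calH_norm :: "real \<Rightarrow> real \<Rightarrow> (real \<Rightarrow> complex) \<Rightarrow> real" where
  "calH_norm s lam f = sqrt (enn2real (Hs_sq s f)) + (enn2real (Llam_pow lam f)) powr (1 / lam)"

definition T_KdV :: "real \<Rightarrow> real \<Rightarrow> (real \<Rightarrow> complex) \<Rightarrow> (real \<Rightarrow> complex) \<Rightarrow> real \<Rightarrow> complex" where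
  "T_KdV \<alpha> M f1 f2 \<xi> =
     (\<integral> \<xi>1. indicator {\<eta>. \<bar>3 * \<xi> * \<eta> * (\<xi> - \<eta>) - \<alpha>\<bar> < M} \<xi>1 *\<^sub>R
              (complex_of_real \<xi> * f1 \<xi>1 * f2 (\<xi> - \<xi>1)) \<partial>lborel)"

end

theory Submission
  imports Defs
begin

definition wt :: "real \<Rightarrow> real \<Rightarrow> real" where "wt s x = (1 + x\<^sup>2) powr s"
definition FF :: "real \<Rightarrow> (real \<Rightarrow> complex) \<Rightarrow> real \<Rightarrow> real" where
  "FF s f x = sqrt (wt s x) * cmod (f x)"
definition KK :: "real \<Rightarrow> real \<Rightarrow> real \<Rightarrow> real" where
  "KK s \<xi> \<eta> = sqrt (wt s \<xi>) * \<bar>\<xi>\<bar> / (sqrt (wt s \<eta>) * sqrt (wt s (\<xi> - \<eta>)))"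
definition AA :: "real \<Rightarrow> real \<Rightarrow> real \<Rightarrow> real \<Rightarrow> real" where
  "AA \<alpha> M \<xi> \<eta> = of_bool (\<bar>3 * \<xi> * \<eta> * (\<xi> - \<eta>) - \<alpha>\<bar> < M)"

lemma wt_meas[measurable (raw)]: assumes [measurable]: "f \<in> borel_measurable M" shows "(\<lambda>x. wt s (f x)) \<in> borel_measurable M"
  unfolding wt_def by measurable
lemma KK_meas[measurable (raw)]: assumes [measurable]: "f \<in> borel_measurable M" "g \<in> borel_measurable M" shows
   "(\<lambda>x. KK s (f x) (g x)) \<in> borel_measurable M"
  unfolding KK_def by measurable
lemma AA_meas[measurable (raw)]: assumes [measurable]: "f \<in> borel_measurable M" "g \<in> borel_measurable M" shows
   "(\<lambda>x. AA \<alpha> Mm (f x) (g x)) \<in> borel_measurable M"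
  unfolding AA_def by measurable
lemma FF_meas[measurable (raw)]: assumes [measurable]: "h \<in> borel_measurable borel" "f \<in> borel_measurable M" shows
   "(\<lambda>x. FF s h (f x)) \<in> borel_measurable M"
  unfolding FF_def by measurable

lemma wt_pos: "wt s x > 0"
proof -
  have "1 + x\<^sup>2 \<noteq> 0" by (smt (verit) zero_le_power2)
  then show ?thesis unfolding wt_def by simp
qed
lemma wt_nn: "wt s x \<ge> 0" using wt_pos[of s x] by simp
lemma wt_ge1: "s \<ge> 0 \<Longrightarrow> wt s x \<ge> 1" unfolding wt_def by (simp add: ge_one_powr_ge_zero)

lemma KK_nonneg: "KK s \<xi> \<eta> \<ge> 0" unfolding KK_def by (simp add: wt_nn)
lemma AA_01: "AA \<alpha> M \<xi> \<eta> = 0 \<or> AA \<alpha> M \<xi> \<eta> = 1" unfolding AA_def by simp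
lemma AA_nn: "AA \<alpha> M \<xi> \<eta> \<ge> 0" unfolding AA_def by simp
lemma FF_nonneg: "FF s f x \<ge> 0" unfolding FF_def by (simp add: wt_nn)

lemma KK_sq: "(KK s \<xi> \<eta>)\<^sup>2 = wt s \<xi> * \<xi>\<^sup>2 / (wt s \<eta> * wt s (\<xi> - \<eta>))"
  unfolding KK_def by (simp add: power_divide power_mult_distrib wt_nn)

lemma KB1: assumes "s \<ge> 0" shows "(KK s \<xi> \<eta>)\<^sup>2 \<le> 2 powr s * \<xi>\<^sup>2"
proof -
  have a: "1 + \<xi>\<^sup>2 \<le> 2 * ((1 + \<eta>\<^sup>2) * (1 + (\<xi> - \<eta>)\<^sup>2))"
  proof -
    have "\<xi>\<^sup>2 \<le> 2 * \<eta>\<^sup>2 + 2 * (\<xi> - \<eta>)\<^sup>2"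
      using sum_squares_ge_zero[of "\<eta> - (\<xi> - \<eta>)" 0] by (simp add: power2_eq_square algebra_simps)
    moreover have "0 \<le> \<eta>\<^sup>2 * (\<xi> - \<eta>)\<^sup>2" by simp
    moreover have "(1 + \<eta>\<^sup>2) * (1 + (\<xi> - \<eta>)\<^sup>2) = 1 + \<eta>\<^sup>2 + (\<xi> - \<eta>)\<^sup>2 + \<eta>\<^sup>2 * (\<xi> - \<eta>)\<^sup>2"
      by (simp add: algebra_simps)
    ultimately show ?thesis by linarith
  qed
  have "wt s \<xi> \<le> 2 powr s * (wt s \<eta> * wt s (\<xi> - \<eta>))"
    unfolding wt_def
    using powr_mono2[OF assms _ a] by (simp add: powr_mult)
  then have "wt s \<xi> / (wt s \<eta> * wt s (\<xi> - \<eta>)) \<le> 2 powr s"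
    using wt_pos[of s] by (simp add: divide_le_eq)
  then have "wt s \<xi> / (wt s \<eta> * wt s (\<xi> - \<eta>)) * \<xi>\<^sup>2 \<le> 2 powr s * \<xi>\<^sup>2"
    by (rule mult_right_mono) simp_all
  moreover have "wt s \<xi> * \<xi>\<^sup>2 / (wt s \<eta> * wt s (\<xi> - \<eta>)) = wt s \<xi> / (wt s \<eta> * wt s (\<xi> - \<eta>)) * \<xi>\<^sup>2"
    by (rule times_divide_eq_left[symmetric])
  ultimately show ?thesis unfolding KK_sq by linarith
qed

lemma KB2: assumes "s \<ge> 0" "\<bar>\<xi>\<bar> \<le> 4 * \<bar>\<eta>\<bar>" shows "(KK s \<xi> \<eta>)\<^sup>2 \<le> 16 powr s * (16 * \<eta>\<^sup>2)"
proof -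
  have x2: "\<xi>\<^sup>2 \<le> 16 * \<eta>\<^sup>2"
  proof -
    have "\<xi>\<^sup>2 = \<bar>\<xi>\<bar>\<^sup>2" by simp
    also have "\<dots> \<le> (4 * \<bar>\<eta>\<bar>)\<^sup>2" using assms(2) by (intro power_mono) auto
    finally show ?thesis by (simp add: power_mult_distrib)
  qed
  have a: "1 + \<xi>\<^sup>2 \<le> 16 * (1 + \<eta>\<^sup>2)" using x2 by simp
  have w: "wt s \<xi> \<le> 16 powr s * wt s \<eta>"
    unfolding wt_def using powr_mono2[OF assms(1) _ a] powr_mult[of 16 "1+\<eta>\<^sup>2" s] by (simp add: add_nonneg_nonneg)
  have "(KK s \<xi> \<eta>)\<^sup>2 \<le> wt s \<xi> * \<xi>\<^sup>2 / wt s \<eta>"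
    unfolding KK_sq
  proof (rule divide_left_mono)
    show "wt s \<eta> \<le> wt s \<eta> * wt s (\<xi> - \<eta>)"
      using wt_pos[of s \<eta>] wt_ge1[OF assms(1), of "\<xi> - \<eta>"] by simp
    show "0 \<le> wt s \<xi> * \<xi>\<^sup>2" by (simp add: wt_nn)
    show "0 < wt s \<eta> * wt s (\<xi> - \<eta>) * wt s \<eta>" by (simp add: wt_pos)
  qed
  also have "\<dots> \<le> 16 powr s * wt s \<eta> * (16 * \<eta>\<^sup>2) / wt s \<eta>"
    using w x2 wt_pos[of s] by (intro divide_right_mono mult_mono) (auto simp: wt_nn)
  also have "\<dots> = 16 powr s * (16 * \<eta>\<^sup>2)" using wt_pos[of s \<eta>] by simp
  finally show ?thesis .
qed

lemma diam_meas:
  fixes S :: "real set"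
  assumes "d \<ge> 0" "\<And>x y. x \<in> S \<Longrightarrow> y \<in> S \<Longrightarrow> \<bar>x - y\<bar> \<le> d"
  shows "\<exists>I\<in>sets lborel. S \<subseteq> I \<and> emeasure lborel I \<le> ennreal (2 * d)"
proof (cases "S = {}")
  case True then show ?thesis by (intro bexI[of _ "{}"]) auto
next
  case False
  then obtain x0 where x0: "x0 \<in> S" by auto
  have "S \<subseteq> {x0 - d .. x0 + d}"
  proof
    fix y assume "y \<in> S"
    then have "\<bar>y - x0\<bar> \<le> d" using assms(2) x0 by blast
    then show "y \<in> {x0 - d .. x0 + d}" by auto
  qed
  moreover have "emeasure lborel {x0 - d .. x0 + d} = ennreal (2 * d)" using assms(1) by simp
  ultimately show ?thesis by (intro bexI[of _ "{x0 - d .. x0 + d}"]) auto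
qed

lemma region1:
  fixes \<xi> \<alpha> M :: real
  assumes "\<xi> \<noteq> 0"
  obtains I1 I2 where "I1 \<in> sets lborel" "I2 \<in> sets lborel" "emeasure lborel I1 \<le> ennreal (2 * (4 * max M 0 / (3 * \<xi>\<^sup>2)))"
     "emeasure lborel I2 \<le> ennreal (2 * (4 * max M 0 / (3 * \<xi>\<^sup>2)))"
     "(\<forall>\<eta>. \<bar>3 * \<xi> * \<eta> * (\<xi> - \<eta>) - \<alpha>\<bar> < M \<and> \<bar>\<xi> - 2 * \<eta>\<bar> \<ge> \<bar>\<xi>\<bar> / 2 \<longrightarrow> \<eta> \<in> I1 \<or> \<eta> \<in> I2)"
proof -
  have xi2: "\<xi>\<^sup>2 > 0" using assms by simp
  define d where "d = 4 * max M 0 / (3 * \<xi>\<^sup>2)"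
  have d0: "d \<ge> 0" unfolding d_def using xi2 by simp
  have key: "\<bar>x - y\<bar> \<le> d" if hx: "\<bar>3 * \<xi> * x * (\<xi> - x) - \<alpha>\<bar> < M" and hy: "\<bar>3 * \<xi> * y * (\<xi> - y) - \<alpha>\<bar> < M"
    and hs: "\<xi> * (\<xi> - x - y) \<ge> \<xi>\<^sup>2 / 2 \<or> \<xi> * (x + y - \<xi>) \<ge> \<xi>\<^sup>2 / 2" for x y
  proof -
    have id: "3 * \<xi> * x * (\<xi> - x) - 3 * \<xi> * y * (\<xi> - y) = 3 * (x - y) * (\<xi> * (\<xi> - x - y))"
      by (simp add: algebra_simps power2_eq_square)
    have lt: "\<bar>3 * (x - y) * (\<xi> * (\<xi> - x - y))\<bar> < 2 * M" using hx hy unfolding id[symmetric] by linarith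
    have e: "\<xi> * (x + y - \<xi>) = - (\<xi> * (\<xi> - x - y))" by (simp add: algebra_simps)
    have ge: "\<bar>\<xi> * (\<xi> - x - y)\<bar> \<ge> \<xi>\<^sup>2 / 2" using hs e by linarith
    have "3 * \<bar>x - y\<bar> * (\<xi>\<^sup>2 / 2) \<le> 3 * \<bar>x - y\<bar> * \<bar>\<xi> * (\<xi> - x - y)\<bar>"
      using ge by (intro mult_left_mono) auto
    also have "\<dots> = \<bar>3 * (x - y) * (\<xi> * (\<xi> - x - y))\<bar>" by (simp only: abs_mult)
    finally have "\<bar>x - y\<bar> * (3 * \<xi>\<^sup>2) \<le> 4 * M" using lt by simp
    then have "\<bar>x - y\<bar> * (3 * \<xi>\<^sup>2) \<le> 4 * max M 0" by linarith
    then show ?thesis unfolding d_def using xi2 by (simp add: pos_le_divide_eq)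
  qed
  define S1 where "S1 = {\<eta>. \<bar>3 * \<xi> * \<eta> * (\<xi> - \<eta>) - \<alpha>\<bar> < M \<and> \<xi> * (2 * \<eta> - \<xi>) \<ge> \<xi>\<^sup>2 / 2}"
  define S2 where "S2 = {\<eta>. \<bar>3 * \<xi> * \<eta> * (\<xi> - \<eta>) - \<alpha>\<bar> < M \<and> \<xi> * (\<xi> - 2 * \<eta>) \<ge> \<xi>\<^sup>2 / 2}"
  have "\<exists>I\<in>sets lborel. S1 \<subseteq> I \<and> emeasure lborel I \<le> ennreal (2 * d)"
  proof (rule diam_meas[OF d0])
    fix x y assume "x \<in> S1" "y \<in> S1"
    then show "\<bar>x - y\<bar> \<le> d" unfolding S1_def
      by (intro key) (auto simp: algebra_simps)
  qed
  then obtain I1 where I1: "I1 \<in> sets lborel" "S1 \<subseteq> I1" "emeasure lborel I1 \<le> ennreal (2 * d)" by blast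
  have "\<exists>I\<in>sets lborel. S2 \<subseteq> I \<and> emeasure lborel I \<le> ennreal (2 * d)"
  proof (rule diam_meas[OF d0])
    fix x y assume "x \<in> S2" "y \<in> S2"
    then show "\<bar>x - y\<bar> \<le> d" unfolding S2_def
      by (intro key) (auto simp: algebra_simps)
  qed
  then obtain I2 where I2: "I2 \<in> sets lborel" "S2 \<subseteq> I2" "emeasure lborel I2 \<le> ennreal (2 * d)" by blast
  have cov: "\<eta> \<in> S1 \<or> \<eta> \<in> S2" if "\<bar>3 * \<xi> * \<eta> * (\<xi> - \<eta>) - \<alpha>\<bar> < M" "\<bar>\<xi> - 2 * \<eta>\<bar> \<ge> \<bar>\<xi>\<bar> / 2" for \<eta>
  proof -
    have "\<bar>\<xi> * (\<xi> - 2 * \<eta>)\<bar> \<ge> \<xi>\<^sup>2 / 2"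
    proof -
      have "\<bar>\<xi>\<bar> * (\<bar>\<xi>\<bar> / 2) \<le> \<bar>\<xi>\<bar> * \<bar>\<xi> - 2 * \<eta>\<bar>" using that(2) by (intro mult_left_mono) auto
      then show ?thesis by (simp add: abs_mult power2_eq_square)
    qed
    then show ?thesis unfolding S1_def S2_def using that(1) by (auto simp: algebra_simps abs_if split: if_splits)
  qed
  show ?thesis by (rule that[of I1 I2]) (use I1 I2 cov in \<open>auto simp: d_def\<close>)
qed

lemma notR_bound: fixes \<xi> \<eta> :: real shows "\<not> (\<bar>\<xi> - 2 * \<eta>\<bar> \<ge> \<bar>\<xi>\<bar> / 2) \<Longrightarrow> \<bar>\<xi>\<bar> \<le> 4 * \<bar>\<eta>\<bar>"
  by linarith

lemma notR_prod: fixes x \<eta> :: real assumes "\<not> (\<bar>x - 2 * \<eta>\<bar> \<ge> \<bar>x\<bar> / 2)" shows "\<eta> * x \<ge> \<eta>\<^sup>2"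
proof -
  have "\<bar>x - 2 * \<eta>\<bar> < \<bar>x\<bar> / 2" using assms by simp
  then have "\<bar>x - 2 * \<eta>\<bar>\<^sup>2 < (\<bar>x\<bar> / 2)\<^sup>2" by (intro power_strict_mono) auto
  then have "(x - 2 * \<eta>)\<^sup>2 < x\<^sup>2 / 4" by (simp add: power_divide)
  moreover have "(x - 2 * \<eta>)\<^sup>2 = x\<^sup>2 - 4 * (\<eta> * x) + 4 * \<eta>\<^sup>2" by (simp add: power2_eq_square algebra_simps)
  moreover have "x\<^sup>2 \<ge> 0" by simp
  ultimately show ?thesis by linarith
qed

lemma region2:
  fixes \<eta> \<alpha> M :: real
  assumes "\<eta> \<noteq> 0"
  obtains I where "I \<in> sets lborel" "emeasure lborel I \<le> ennreal (2 * (2 * max M 0 / (3 * \<eta>\<^sup>2)))"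
     "(\<forall>\<xi>. \<bar>3 * \<xi> * \<eta> * (\<xi> - \<eta>) - \<alpha>\<bar> < M \<and> \<not> (\<bar>\<xi> - 2 * \<eta>\<bar> \<ge> \<bar>\<xi>\<bar> / 2) \<longrightarrow> \<xi> \<in> I)"
proof -
  have e2: "\<eta>\<^sup>2 > 0" using assms by simp
  define d where "d = 2 * max M 0 / (3 * \<eta>\<^sup>2)"
  have d0: "d \<ge> 0" unfolding d_def using e2 by simp
  define S where "S = {\<xi>. \<bar>3 * \<xi> * \<eta> * (\<xi> - \<eta>) - \<alpha>\<bar> < M \<and> \<not> (\<bar>\<xi> - 2 * \<eta>\<bar> \<ge> \<bar>\<xi>\<bar> / 2)}"
  have "\<exists>I\<in>sets lborel. S \<subseteq> I \<and> emeasure lborel I \<le> ennreal (2 * d)"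
  proof (rule diam_meas[OF d0])
    fix x y assume "x \<in> S" "y \<in> S"
    then have hx: "\<bar>3 * x * \<eta> * (x - \<eta>) - \<alpha>\<bar> < M" and hy: "\<bar>3 * y * \<eta> * (y - \<eta>) - \<alpha>\<bar> < M"
      and px: "\<eta> * x \<ge> \<eta>\<^sup>2" and py: "\<eta> * y \<ge> \<eta>\<^sup>2" unfolding S_def using notR_prod[of x \<eta>] notR_prod[of y \<eta>] by auto
    have id: "3 * x * \<eta> * (x - \<eta>) - 3 * y * \<eta> * (y - \<eta>) = 3 * (x - y) * (\<eta> * (x + y - \<eta>))"
      by (simp add: algebra_simps power2_eq_square)
    have lt: "\<bar>3 * (x - y) * (\<eta> * (x + y - \<eta>))\<bar> < 2 * M" using hx hy unfolding id[symmetric] by linarith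
    have ge: "\<eta> * (x + y - \<eta>) \<ge> \<eta>\<^sup>2" using px py by (simp add: algebra_simps power2_eq_square)
    then have ge': "\<bar>\<eta> * (x + y - \<eta>)\<bar> \<ge> \<eta>\<^sup>2" by linarith
    have "3 * \<bar>x - y\<bar> * \<eta>\<^sup>2 \<le> 3 * \<bar>x - y\<bar> * \<bar>\<eta> * (x + y - \<eta>)\<bar>"
      using ge' by (intro mult_left_mono) auto
    also have "\<dots> = \<bar>3 * (x - y) * (\<eta> * (x + y - \<eta>))\<bar>" by (simp only: abs_mult)
    finally have "\<bar>x - y\<bar> * (3 * \<eta>\<^sup>2) \<le> 2 * M" using lt by simp
    then have "\<bar>x - y\<bar> * (3 * \<eta>\<^sup>2) \<le> 2 * max M 0" by linarith
    then show "\<bar>x - y\<bar> \<le> d" unfolding d_def using e2 by (simp add: pos_le_divide_eq)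
  qed
  then obtain I where "I \<in> sets lborel" "S \<subseteq> I" "emeasure lborel I \<le> ennreal (2 * d)" by blast
  then show ?thesis by (intro that[of I]) (auto simp: d_def S_def)
qed

lemma int_two:
  fixes g :: "real \<Rightarrow> real"
  assumes c: "c \<ge> 0" and e: "e \<ge> 0" and I: "I1 \<in> sets lborel" "I2 \<in> sets lborel"
    and m: "emeasure lborel I1 \<le> ennreal e" "emeasure lborel I2 \<le> ennreal e"
    and g: "\<And>x. g x \<le> c * (indicator I1 x + indicator I2 x)"
  shows "(\<integral>\<^sup>+x. ennreal (g x) \<partial>lborel) \<le> ennreal (2 * c * e)"
proof -
  have "(\<integral>\<^sup>+x. ennreal (g x) \<partial>lborel) \<le> (\<integral>\<^sup>+x. ennreal c * (indicator I1 x + indicator I2 x) \<partial>lborel)"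
  proof (rule nn_integral_mono)
    fix x
    have "ennreal (g x) \<le> ennreal (c * (indicator I1 x + indicator I2 x))" using g by (rule ennreal_leI)
    also have "\<dots> = ennreal c * (indicator I1 x + indicator I2 x)"
      using c by (simp add: ennreal_mult' ennreal_plus indicator_def)
    finally show "ennreal (g x) \<le> ennreal c * (indicator I1 x + indicator I2 x)" .
  qed
  also have "\<dots> = ennreal c * (emeasure lborel I1 + emeasure lborel I2)"
    using I by (simp add: nn_integral_cmult nn_integral_add)
  also have "\<dots> \<le> ennreal c * (ennreal e + ennreal e)"
    using m by (intro mult_left_mono add_mono) auto
  also have "\<dots> = ennreal (2 * c * e)"
    using c e by (simp add: ennreal_mult'[symmetric] ennreal_plus[symmetric] del: ennreal_plus)
  finally show ?thesis .
qed

definition RR :: "real \<Rightarrow> real \<Rightarrow> bool" where "RR \<xi> \<eta> \<longleftrightarrow> \<bar>\<xi> - 2 * \<eta>\<bar> \<ge> \<bar>\<xi>\<bar> / 2"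

lemma RR_meas[measurable (raw)]: assumes [measurable]: "f \<in> borel_measurable M" "g \<in> borel_measurable M" shows
   "Measurable.pred M (\<lambda>x. RR (f x) (g x))"
  unfolding RR_def by measurable


lemma KI1:
  assumes s: "s \<ge> 0"
  shows "(\<integral>\<^sup>+\<eta>. ennreal ((KK s \<xi> \<eta> * AA \<alpha> M \<xi> \<eta> * of_bool (RR \<xi> \<eta>))\<^sup>2) \<partial>lborel)
          \<le> ennreal (2 powr s * (16 / 3) * max M 0)"
proof (cases "\<xi> = 0")
  case True
  then show ?thesis by (simp add: KK_def)
next
  case False
  have xi2: "\<xi>\<^sup>2 > 0" using False by simp
  obtain I1 I2 where I: "I1 \<in> sets lborel" "I2 \<in> sets lborel"
    and m: "emeasure lborel I1 \<le> ennreal (2 * (4 * max M 0 / (3 * \<xi>\<^sup>2)))"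
           "emeasure lborel I2 \<le> ennreal (2 * (4 * max M 0 / (3 * \<xi>\<^sup>2)))"
    and cov0: "\<forall>\<eta>. \<bar>3 * \<xi> * \<eta> * (\<xi> - \<eta>) - \<alpha>\<bar> < M \<and> \<bar>\<xi> - 2 * \<eta>\<bar> \<ge> \<bar>\<xi>\<bar> / 2 \<longrightarrow> \<eta> \<in> I1 \<or> \<eta> \<in> I2"
    by (rule region1[OF False, where \<alpha>=\<alpha> and M=M]) blast
  note cov = cov0[rule_format]
  have c0: "0 \<le> 2 powr s * \<xi>\<^sup>2" by simp
  have e0: "0 \<le> 2 * (4 * max M 0 / (3 * \<xi>\<^sup>2))" using xi2 by (intro mult_nonneg_nonneg divide_nonneg_pos) auto
  have "(\<integral>\<^sup>+\<eta>. ennreal ((KK s \<xi> \<eta> * AA \<alpha> M \<xi> \<eta> * of_bool (RR \<xi> \<eta>))\<^sup>2) \<partial>lborel)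
     \<le> ennreal (2 * (2 powr s * \<xi>\<^sup>2) * (2 * (4 * max M 0 / (3 * \<xi>\<^sup>2))))"
  proof (rule int_two[OF c0 e0 I m])
    fix \<eta>
    show "(KK s \<xi> \<eta> * AA \<alpha> M \<xi> \<eta> * of_bool (RR \<xi> \<eta>))\<^sup>2 \<le> 2 powr s * \<xi>\<^sup>2 * (indicator I1 \<eta> + indicator I2 \<eta>)"
    proof (cases "\<bar>3 * \<xi> * \<eta> * (\<xi> - \<eta>) - \<alpha>\<bar> < M \<and> RR \<xi> \<eta>")
      case True
      then have "indicator I1 \<eta> + indicator I2 \<eta> \<ge> (1::real)" using cov[of \<eta>] unfolding RR_def
        by (auto simp: indicator_def)
      have "(KK s \<xi> \<eta>)\<^sup>2 \<le> 2 powr s * \<xi>\<^sup>2 * 1" using KB1[OF s] by simp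
      also have "\<dots> \<le> 2 powr s * \<xi>\<^sup>2 * (indicator I1 \<eta> + indicator I2 \<eta>)"
        using \<open>indicator I1 \<eta> + indicator I2 \<eta> \<ge> (1::real)\<close> by (intro mult_left_mono) simp_all
      finally have "(KK s \<xi> \<eta>)\<^sup>2 \<le> 2 powr s * \<xi>\<^sup>2 * (indicator I1 \<eta> + indicator I2 \<eta>)" .
      then show ?thesis using True by (simp add: AA_def)
    next
      case False
      then show ?thesis by (auto simp: AA_def indicator_def)
    qed
  qed
  also have "\<dots> = ennreal (2 powr s * (16 / 3) * max M 0)"
    by (rule arg_cong[where f=ennreal]) (use xi2 in \<open>simp add: field_simps\<close>)
  finally show ?thesis .
qed


lemma KI2:
  assumes s: "s \<ge> 0"
  shows "(\<integral>\<^sup>+\<xi>. ennreal ((KK s \<xi> \<eta> * AA \<alpha> M \<xi> \<eta> * of_bool (\<not> RR \<xi> \<eta>))\<^sup>2) \<partial>lborel)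
          \<le> ennreal (16 powr s * (128 / 3) * max M 0)"
proof (cases "\<eta> = 0")
  case True
  then have "RR \<xi> \<eta>" for \<xi> unfolding RR_def by auto
  then show ?thesis by simp
next
  case False
  have e2: "\<eta>\<^sup>2 > 0" using False by simp
  obtain I where I: "I \<in> sets lborel"
    and m: "emeasure lborel I \<le> ennreal (2 * (2 * max M 0 / (3 * \<eta>\<^sup>2)))"
    and cov0: "\<forall>\<xi>. \<bar>3 * \<xi> * \<eta> * (\<xi> - \<eta>) - \<alpha>\<bar> < M \<and> \<not> (\<bar>\<xi> - 2 * \<eta>\<bar> \<ge> \<bar>\<xi>\<bar> / 2) \<longrightarrow> \<xi> \<in> I"
    by (rule region2[OF False, where \<alpha>=\<alpha> and M=M]) blast
  note cov = cov0[rule_format]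
  have m0: "emeasure lborel {} \<le> ennreal (2 * (2 * max M 0 / (3 * \<eta>\<^sup>2)))" by simp
  have c0: "0 \<le> 16 powr s * (16 * \<eta>\<^sup>2)" by simp
  have e0: "0 \<le> 2 * (2 * max M 0 / (3 * \<eta>\<^sup>2))" using e2 by (intro mult_nonneg_nonneg divide_nonneg_pos) auto
  have "(\<integral>\<^sup>+\<xi>. ennreal ((KK s \<xi> \<eta> * AA \<alpha> M \<xi> \<eta> * of_bool (\<not> RR \<xi> \<eta>))\<^sup>2) \<partial>lborel)
     \<le> ennreal (2 * (16 powr s * (16 * \<eta>\<^sup>2)) * (2 * (2 * max M 0 / (3 * \<eta>\<^sup>2))))"
  proof (rule int_two[OF c0 e0 I sets.empty_sets m m0])
    fix \<xi>
    show "(KK s \<xi> \<eta> * AA \<alpha> M \<xi> \<eta> * of_bool (\<not> RR \<xi> \<eta>))\<^sup>2 \<le> 16 powr s * (16 * \<eta>\<^sup>2) * (indicator I \<xi> + indicator {} \<xi>)"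
    proof (cases "\<bar>3 * \<xi> * \<eta> * (\<xi> - \<eta>) - \<alpha>\<bar> < M \<and> \<not> RR \<xi> \<eta>")
      case True
      then have "\<xi> \<in> I" using cov[of \<xi>] unfolding RR_def by auto
      moreover have "(KK s \<xi> \<eta>)\<^sup>2 \<le> 16 powr s * (16 * \<eta>\<^sup>2)"
        using True notR_bound[of \<xi> \<eta>] unfolding RR_def by (intro KB2[OF s]) auto
      ultimately show ?thesis using True by (simp add: AA_def indicator_def)
    next
      case False
      then show ?thesis by (auto simp: AA_def indicator_def)
    qed
  qed
  also have "\<dots> = ennreal (16 powr s * (128 / 3) * max M 0)"
    by (rule arg_cong[where f=ennreal]) (use e2 in \<open>simp add: field_simps\<close>)
  finally show ?thesis .
qed


lemma ennreal_sq_add: "((a::ennreal) + b)\<^sup>2 \<le> 2 * a\<^sup>2 + 2 * b\<^sup>2"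
proof (cases a; cases b)
  fix x y :: real assume ab: "a = ennreal x" "0 \<le> x" "b = ennreal y" "0 \<le> y"
  have r: "(x + y)\<^sup>2 \<le> 2 * x\<^sup>2 + 2 * y\<^sup>2"
    using sum_squares_ge_zero[of "x - y" 0] by (simp add: power2_eq_square algebra_simps)
  have "(a + b)\<^sup>2 = ennreal ((x + y)\<^sup>2)" using ab by (simp add: ennreal_plus[symmetric] ennreal_power del: ennreal_plus)
  also have "\<dots> \<le> ennreal (2 * x\<^sup>2 + 2 * y\<^sup>2)" using r by (rule ennreal_leI)
  also have "\<dots> = ennreal (2 * x\<^sup>2) + ennreal (2 * y\<^sup>2)" by (rule ennreal_plus) simp_all
  also have "\<dots> = 2 * ennreal (x\<^sup>2) + 2 * ennreal (y\<^sup>2)" by (simp add: ennreal_mult')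
  also have "\<dots> = 2 * a\<^sup>2 + 2 * b\<^sup>2" using ab by (simp add: ennreal_power)
  finally show ?thesis .
qed (auto simp: ennreal_mult_top)

lemma T_eq: "T_KdV \<alpha> M f1 f2 \<xi> = (\<integral>\<eta>. AA \<alpha> M \<xi> \<eta> *\<^sub>R (complex_of_real \<xi> * f1 \<eta> * f2 (\<xi> - \<eta>)) \<partial>lborel)"
  unfolding T_KdV_def AA_def by (simp add: indicator_def of_bool_def)

lemma P1:
  assumes [measurable]: "f1 \<in> borel_measurable borel" "f2 \<in> borel_measurable borel"
  shows "ennreal (FF s (T_KdV \<alpha> M f1 f2) \<xi>) \<le> (\<integral>\<^sup>+\<eta>. ennreal (KK s \<xi> \<eta> * AA \<alpha> M \<xi> \<eta> * FF s f1 \<eta> * FF s f2 (\<xi> - \<eta>)) \<partial>lborel)"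
proof -
  define g where "g = (\<lambda>\<eta>. AA \<alpha> M \<xi> \<eta> *\<^sub>R (complex_of_real \<xi> * f1 \<eta> * f2 (\<xi> - \<eta>)))"
  have ng: "norm (g \<eta>) = AA \<alpha> M \<xi> \<eta> * \<bar>\<xi>\<bar> * cmod (f1 \<eta>) * cmod (f2 (\<xi> - \<eta>))" for \<eta>
    unfolding g_def using AA_nn[of \<alpha> M \<xi> \<eta>] by (simp add: norm_mult)
  have n: "ennreal (cmod (T_KdV \<alpha> M f1 f2 \<xi>)) \<le> (\<integral>\<^sup>+\<eta>. ennreal (AA \<alpha> M \<xi> \<eta> * \<bar>\<xi>\<bar> * cmod (f1 \<eta>) * cmod (f2 (\<xi> - \<eta>))) \<partial>lborel)"
  proof (cases "integrable lborel g")
    case True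
    have "ennreal (cmod (T_KdV \<alpha> M f1 f2 \<xi>)) = ennreal (norm (integral\<^sup>L lborel g))"
      unfolding T_eq g_def ..
    also have "\<dots> \<le> (\<integral>\<^sup>+\<eta>. norm (g \<eta>) \<partial>lborel)" by (rule integral_norm_bound_ennreal[OF True])
    finally show ?thesis unfolding ng .
  next
    case False
    then have "T_KdV \<alpha> M f1 f2 \<xi> = 0" unfolding T_eq g_def[symmetric] by (rule not_integrable_integral_eq)
    then show ?thesis by simp
  qed
  have "ennreal (FF s (T_KdV \<alpha> M f1 f2) \<xi>) = ennreal (sqrt (wt s \<xi>)) * ennreal (cmod (T_KdV \<alpha> M f1 f2 \<xi>))"
    unfolding FF_def by (simp add: ennreal_mult' wt_nn)
  also have "\<dots> \<le> ennreal (sqrt (wt s \<xi>)) * (\<integral>\<^sup>+\<eta>. ennreal (AA \<alpha> M \<xi> \<eta> * \<bar>\<xi>\<bar> * cmod (f1 \<eta>) * cmod (f2 (\<xi> - \<eta>))) \<partial>lborel)"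
    using n by (rule mult_left_mono) simp
  also have "\<dots> = (\<integral>\<^sup>+\<eta>. ennreal (sqrt (wt s \<xi>)) * ennreal (AA \<alpha> M \<xi> \<eta> * \<bar>\<xi>\<bar> * cmod (f1 \<eta>) * cmod (f2 (\<xi> - \<eta>))) \<partial>lborel)"
    by (rule nn_integral_cmult[symmetric]) measurable
  also have "\<dots> = (\<integral>\<^sup>+\<eta>. ennreal (KK s \<xi> \<eta> * AA \<alpha> M \<xi> \<eta> * FF s f1 \<eta> * FF s f2 (\<xi> - \<eta>)) \<partial>lborel)"
  proof (rule nn_integral_cong)
    fix \<eta>
    have p1: "sqrt (wt s \<eta>) > 0" "sqrt (wt s (\<xi> - \<eta>)) > 0" by (simp_all add: wt_pos)
    have e: "sqrt (wt s \<xi>) * (AA \<alpha> M \<xi> \<eta> * \<bar>\<xi>\<bar> * cmod (f1 \<eta>) * cmod (f2 (\<xi> - \<eta>)))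
       = KK s \<xi> \<eta> * AA \<alpha> M \<xi> \<eta> * FF s f1 \<eta> * FF s f2 (\<xi> - \<eta>)"
      unfolding KK_def FF_def using p1 by (simp add: field_simps)
    show "ennreal (sqrt (wt s \<xi>)) * ennreal (AA \<alpha> M \<xi> \<eta> * \<bar>\<xi>\<bar> * cmod (f1 \<eta>) * cmod (f2 (\<xi> - \<eta>)))
       = ennreal (KK s \<xi> \<eta> * AA \<alpha> M \<xi> \<eta> * FF s f1 \<eta> * FF s f2 (\<xi> - \<eta>))"
      unfolding e[symmetric] by (rule ennreal_mult'[symmetric]) (simp add: wt_nn)
  qed
  finally show ?thesis .
qed

lemma Hs_FF: "Hs_sq s f = (\<integral>\<^sup>+x. ennreal ((FF s f x)\<^sup>2) \<partial>lborel)"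
  unfolding Hs_sq_def FF_def by (simp add: power_mult_distrib wt_nn wt_def)

lemma Hs_shift:
  assumes [measurable]: "f \<in> borel_measurable borel"
  shows "(\<integral>\<^sup>+\<xi>. ennreal ((FF s f (\<xi> - \<eta>))\<^sup>2) \<partial>lborel) = Hs_sq s f"
  using nn_integral_real_affine[of "\<lambda>x. ennreal ((FF s f x)\<^sup>2)" 1 "- \<eta>"]
  by (simp add: Hs_FF)

lemma Hs_refl:
  assumes [measurable]: "f \<in> borel_measurable borel"
  shows "(\<integral>\<^sup>+\<eta>. ennreal ((FF s f (\<xi> - \<eta>))\<^sup>2) \<partial>lborel) = Hs_sq s f"
  using nn_integral_real_affine[of "\<lambda>x. ennreal ((FF s f x)\<^sup>2)" "-1" "\<xi>"]
  by (simp add: Hs_FF)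

definition G1 :: "real \<Rightarrow> real \<Rightarrow> real \<Rightarrow> (real \<Rightarrow> complex) \<Rightarrow> (real \<Rightarrow> complex) \<Rightarrow> real \<Rightarrow> real \<Rightarrow> real" where
  "G1 s \<alpha> M f1 f2 \<xi> \<eta> = KK s \<xi> \<eta> * AA \<alpha> M \<xi> \<eta> * of_bool (RR \<xi> \<eta>) * (FF s f1 \<eta> * FF s f2 (\<xi> - \<eta>))"
definition G2 :: "real \<Rightarrow> real \<Rightarrow> real \<Rightarrow> (real \<Rightarrow> complex) \<Rightarrow> (real \<Rightarrow> complex) \<Rightarrow> real \<Rightarrow> real \<Rightarrow> real" where
  "G2 s \<alpha> M f1 f2 \<xi> \<eta> = KK s \<xi> \<eta> * AA \<alpha> M \<xi> \<eta> * of_bool (\<not> RR \<xi> \<eta>) * FF s f1 \<eta> * FF s f2 (\<xi> - \<eta>)"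

lemma G1_meas[measurable (raw)]: assumes [measurable]: "f1 \<in> borel_measurable borel" "f2 \<in> borel_measurable borel"
  "f \<in> borel_measurable N" "g \<in> borel_measurable N"
  shows "(\<lambda>x. G1 s \<alpha> M f1 f2 (f x) (g x)) \<in> borel_measurable N"
  unfolding G1_def by measurable
lemma G2_meas[measurable (raw)]: assumes [measurable]: "f1 \<in> borel_measurable borel" "f2 \<in> borel_measurable borel"
  "f \<in> borel_measurable N" "g \<in> borel_measurable N"
  shows "(\<lambda>x. G2 s \<alpha> M f1 f2 (f x) (g x)) \<in> borel_measurable N"
  unfolding G2_def by measurable

lemma G_nn: "G1 s \<alpha> M f1 f2 \<xi> \<eta> \<ge> 0" "G2 s \<alpha> M f1 f2 \<xi> \<eta> \<ge> 0"
  unfolding G1_def G2_def by (simp_all add: KK_nonneg AA_nn FF_nonneg)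

lemma G_split: "KK s \<xi> \<eta> * AA \<alpha> M \<xi> \<eta> * FF s f1 \<eta> * FF s f2 (\<xi> - \<eta>) = G1 s \<alpha> M f1 f2 \<xi> \<eta> + G2 s \<alpha> M f1 f2 \<xi> \<eta>"
  unfolding G1_def G2_def by (cases "RR \<xi> \<eta>") simp_all

lemma I1_bound:
  assumes [measurable]: "f1 \<in> borel_measurable borel" "f2 \<in> borel_measurable borel" and s: "s \<ge> 0"
  shows "(\<integral>\<^sup>+\<xi>. (\<integral>\<^sup>+\<eta>. ennreal (G1 s \<alpha> M f1 f2 \<xi> \<eta>) \<partial>lborel)\<^sup>2 \<partial>lborel)
     \<le> ennreal (2 powr s * (16 / 3) * max M 0) * (Hs_sq s f1 * Hs_sq s f2)"
proof -
  define c where "c = 2 powr s * (16 / 3) * max M 0"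
  have pt: "(\<integral>\<^sup>+\<eta>. ennreal (G1 s \<alpha> M f1 f2 \<xi> \<eta>) \<partial>lborel)\<^sup>2
      \<le> ennreal c * (\<integral>\<^sup>+\<eta>. ennreal ((FF s f1 \<eta>)\<^sup>2 * (FF s f2 (\<xi> - \<eta>))\<^sup>2) \<partial>lborel)" for \<xi>
  proof -
    have "(\<integral>\<^sup>+\<eta>. ennreal (G1 s \<alpha> M f1 f2 \<xi> \<eta>) \<partial>lborel)
       = (\<integral>\<^sup>+\<eta>. ennreal (KK s \<xi> \<eta> * AA \<alpha> M \<xi> \<eta> * of_bool (RR \<xi> \<eta>)) * ennreal (FF s f1 \<eta> * FF s f2 (\<xi> - \<eta>)) \<partial>lborel)"
      unfolding G1_def by (intro nn_integral_cong ennreal_mult') (simp add: KK_nonneg AA_nn)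
    then have "(\<integral>\<^sup>+\<eta>. ennreal (G1 s \<alpha> M f1 f2 \<xi> \<eta>) \<partial>lborel)\<^sup>2
       \<le> (\<integral>\<^sup>+\<eta>. (ennreal (KK s \<xi> \<eta> * AA \<alpha> M \<xi> \<eta> * of_bool (RR \<xi> \<eta>)))\<^sup>2 \<partial>lborel) *
         (\<integral>\<^sup>+\<eta>. (ennreal (FF s f1 \<eta> * FF s f2 (\<xi> - \<eta>)))\<^sup>2 \<partial>lborel)"
      by (simp only:) (rule Cauchy_Schwarz_nn_integral; measurable)
    also have "\<dots> = (\<integral>\<^sup>+\<eta>. ennreal ((KK s \<xi> \<eta> * AA \<alpha> M \<xi> \<eta> * of_bool (RR \<xi> \<eta>))\<^sup>2) \<partial>lborel) *
         (\<integral>\<^sup>+\<eta>. ennreal ((FF s f1 \<eta>)\<^sup>2 * (FF s f2 (\<xi> - \<eta>))\<^sup>2) \<partial>lborel)"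
      by (simp add: ennreal_power KK_nonneg AA_nn FF_nonneg power_mult_distrib)
    also have "\<dots> \<le> ennreal c * (\<integral>\<^sup>+\<eta>. ennreal ((FF s f1 \<eta>)\<^sup>2 * (FF s f2 (\<xi> - \<eta>))\<^sup>2) \<partial>lborel)"
      unfolding c_def by (intro mult_right_mono KI1[OF s]) simp
    finally show ?thesis .
  qed
  have "(\<integral>\<^sup>+\<xi>. (\<integral>\<^sup>+\<eta>. ennreal (G1 s \<alpha> M f1 f2 \<xi> \<eta>) \<partial>lborel)\<^sup>2 \<partial>lborel)
     \<le> (\<integral>\<^sup>+\<xi>. ennreal c * (\<integral>\<^sup>+\<eta>. ennreal ((FF s f1 \<eta>)\<^sup>2 * (FF s f2 (\<xi> - \<eta>))\<^sup>2) \<partial>lborel) \<partial>lborel)"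
    by (intro nn_integral_mono pt)
  also have "\<dots> = ennreal c * (\<integral>\<^sup>+\<xi>. (\<integral>\<^sup>+\<eta>. ennreal ((FF s f1 \<eta>)\<^sup>2 * (FF s f2 (\<xi> - \<eta>))\<^sup>2) \<partial>lborel) \<partial>lborel)"
    by (rule nn_integral_cmult) measurable
  also have "(\<integral>\<^sup>+\<xi>. (\<integral>\<^sup>+\<eta>. ennreal ((FF s f1 \<eta>)\<^sup>2 * (FF s f2 (\<xi> - \<eta>))\<^sup>2) \<partial>lborel) \<partial>lborel)
      = (\<integral>\<^sup>+\<eta>. (\<integral>\<^sup>+\<xi>. ennreal ((FF s f1 \<eta>)\<^sup>2 * (FF s f2 (\<xi> - \<eta>))\<^sup>2) \<partial>lborel) \<partial>lborel)"
    by (rule lborel_pair.Fubini'[of "\<lambda>\<eta> \<xi>. ennreal ((FF s f1 \<eta>)\<^sup>2 * (FF s f2 (\<xi> - \<eta>))\<^sup>2)"]) measurable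
  also have "\<dots> = (\<integral>\<^sup>+\<eta>. ennreal ((FF s f1 \<eta>)\<^sup>2) * Hs_sq s f2 \<partial>lborel)"
  proof (rule nn_integral_cong)
    fix \<eta>
    have "(\<integral>\<^sup>+\<xi>. ennreal ((FF s f1 \<eta>)\<^sup>2 * (FF s f2 (\<xi> - \<eta>))\<^sup>2) \<partial>lborel)
        = (\<integral>\<^sup>+\<xi>. ennreal ((FF s f1 \<eta>)\<^sup>2) * ennreal ((FF s f2 (\<xi> - \<eta>))\<^sup>2) \<partial>lborel)"
      by (intro nn_integral_cong ennreal_mult') simp
    also have "\<dots> = ennreal ((FF s f1 \<eta>)\<^sup>2) * (\<integral>\<^sup>+\<xi>. ennreal ((FF s f2 (\<xi> - \<eta>))\<^sup>2) \<partial>lborel)"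
      by (rule nn_integral_cmult) measurable
    also have "\<dots> = ennreal ((FF s f1 \<eta>)\<^sup>2) * Hs_sq s f2" by (simp add: Hs_shift)
    finally show "(\<integral>\<^sup>+\<xi>. ennreal ((FF s f1 \<eta>)\<^sup>2 * (FF s f2 (\<xi> - \<eta>))\<^sup>2) \<partial>lborel) = ennreal ((FF s f1 \<eta>)\<^sup>2) * Hs_sq s f2" .
  qed
  also have "\<dots> = Hs_sq s f1 * Hs_sq s f2"
    by (subst nn_integral_multc) (measurable, simp add: Hs_FF)
  finally show ?thesis unfolding c_def .
qed

lemma I2_bound:
  assumes [measurable]: "f1 \<in> borel_measurable borel" "f2 \<in> borel_measurable borel" and s: "s \<ge> 0"
  shows "(\<integral>\<^sup>+\<xi>. (\<integral>\<^sup>+\<eta>. ennreal (G2 s \<alpha> M f1 f2 \<xi> \<eta>) \<partial>lborel)\<^sup>2 \<partial>lborel)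
     \<le> ennreal (16 powr s * (128 / 3) * max M 0) * (Hs_sq s f1 * Hs_sq s f2)"
proof -
  define c where "c = 16 powr s * (128 / 3) * max M 0"
  define k where "k = (\<lambda>\<xi> \<eta>. KK s \<xi> \<eta> * AA \<alpha> M \<xi> \<eta> * of_bool (\<not> RR \<xi> \<eta>))"
  have k_nn: "k \<xi> \<eta> \<ge> 0" for \<xi> \<eta> unfolding k_def by (simp add: KK_nonneg AA_nn)
  have [measurable]: "case_prod k \<in> borel_measurable (lborel \<Otimes>\<^sub>M lborel)" unfolding k_def by measurable
  have k_meas2[measurable]: "(\<lambda>x. k (f x) (g x)) \<in> borel_measurable N" if [measurable]: "f \<in> borel_measurable N" "g \<in> borel_measurable N" for f g and N :: "'a measure"
    unfolding k_def by measurable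
  have pt: "(\<integral>\<^sup>+\<eta>. ennreal (G2 s \<alpha> M f1 f2 \<xi> \<eta>) \<partial>lborel)\<^sup>2
      \<le> (\<integral>\<^sup>+\<eta>. ennreal ((k \<xi> \<eta>)\<^sup>2 * (FF s f1 \<eta>)\<^sup>2) \<partial>lborel) * Hs_sq s f2" for \<xi>
  proof -
    have "(\<integral>\<^sup>+\<eta>. ennreal (G2 s \<alpha> M f1 f2 \<xi> \<eta>) \<partial>lborel)
       = (\<integral>\<^sup>+\<eta>. ennreal (k \<xi> \<eta> * FF s f1 \<eta>) * ennreal (FF s f2 (\<xi> - \<eta>)) \<partial>lborel)"
      unfolding G2_def k_def by (intro nn_integral_cong ennreal_mult') (simp add: KK_nonneg AA_nn FF_nonneg)
    then have "(\<integral>\<^sup>+\<eta>. ennreal (G2 s \<alpha> M f1 f2 \<xi> \<eta>) \<partial>lborel)\<^sup>2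
       \<le> (\<integral>\<^sup>+\<eta>. (ennreal (k \<xi> \<eta> * FF s f1 \<eta>))\<^sup>2 \<partial>lborel) *
         (\<integral>\<^sup>+\<eta>. (ennreal (FF s f2 (\<xi> - \<eta>)))\<^sup>2 \<partial>lborel)"
      by (simp only:) (rule Cauchy_Schwarz_nn_integral; measurable)
    also have "\<dots> = (\<integral>\<^sup>+\<eta>. ennreal ((k \<xi> \<eta>)\<^sup>2 * (FF s f1 \<eta>)\<^sup>2) \<partial>lborel) *
         (\<integral>\<^sup>+\<eta>. ennreal ((FF s f2 (\<xi> - \<eta>))\<^sup>2) \<partial>lborel)"
      by (simp add: ennreal_power k_nn FF_nonneg power_mult_distrib)
    also have "\<dots> = (\<integral>\<^sup>+\<eta>. ennreal ((k \<xi> \<eta>)\<^sup>2 * (FF s f1 \<eta>)\<^sup>2) \<partial>lborel) * Hs_sq s f2"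
      by (simp add: Hs_refl)
    finally show ?thesis .
  qed
  have "(\<integral>\<^sup>+\<xi>. (\<integral>\<^sup>+\<eta>. ennreal (G2 s \<alpha> M f1 f2 \<xi> \<eta>) \<partial>lborel)\<^sup>2 \<partial>lborel)
     \<le> (\<integral>\<^sup>+\<xi>. (\<integral>\<^sup>+\<eta>. ennreal ((k \<xi> \<eta>)\<^sup>2 * (FF s f1 \<eta>)\<^sup>2) \<partial>lborel) * Hs_sq s f2 \<partial>lborel)"
    by (intro nn_integral_mono pt)
  also have "\<dots> = (\<integral>\<^sup>+\<xi>. (\<integral>\<^sup>+\<eta>. ennreal ((k \<xi> \<eta>)\<^sup>2 * (FF s f1 \<eta>)\<^sup>2) \<partial>lborel) \<partial>lborel) * Hs_sq s f2"
    by (rule nn_integral_multc) measurable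
  also have "(\<integral>\<^sup>+\<xi>. (\<integral>\<^sup>+\<eta>. ennreal ((k \<xi> \<eta>)\<^sup>2 * (FF s f1 \<eta>)\<^sup>2) \<partial>lborel) \<partial>lborel)
      = (\<integral>\<^sup>+\<eta>. (\<integral>\<^sup>+\<xi>. ennreal ((k \<xi> \<eta>)\<^sup>2 * (FF s f1 \<eta>)\<^sup>2) \<partial>lborel) \<partial>lborel)"
    by (rule lborel_pair.Fubini'[of "\<lambda>\<eta> \<xi>. ennreal ((k \<xi> \<eta>)\<^sup>2 * (FF s f1 \<eta>)\<^sup>2)"]) measurable
  also have "\<dots> \<le> (\<integral>\<^sup>+\<eta>. ennreal ((FF s f1 \<eta>)\<^sup>2) * ennreal c \<partial>lborel)"
  proof (rule nn_integral_mono)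
    fix \<eta>
    have "(\<integral>\<^sup>+\<xi>. ennreal ((k \<xi> \<eta>)\<^sup>2 * (FF s f1 \<eta>)\<^sup>2) \<partial>lborel)
        = (\<integral>\<^sup>+\<xi>. ennreal ((FF s f1 \<eta>)\<^sup>2) * ennreal ((k \<xi> \<eta>)\<^sup>2) \<partial>lborel)"
      by (intro nn_integral_cong) (simp add: ennreal_mult'[symmetric] mult.commute)
    also have "\<dots> = ennreal ((FF s f1 \<eta>)\<^sup>2) * (\<integral>\<^sup>+\<xi>. ennreal ((k \<xi> \<eta>)\<^sup>2) \<partial>lborel)"
      by (rule nn_integral_cmult) measurable
    also have "\<dots> \<le> ennreal ((FF s f1 \<eta>)\<^sup>2) * ennreal c"
      unfolding c_def k_def by (intro mult_left_mono KI2[OF s]) simp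
    finally show "(\<integral>\<^sup>+\<xi>. ennreal ((k \<xi> \<eta>)\<^sup>2 * (FF s f1 \<eta>)\<^sup>2) \<partial>lborel) \<le> ennreal ((FF s f1 \<eta>)\<^sup>2) * ennreal c" .
  qed
  also have "\<dots> = Hs_sq s f1 * ennreal c"
    by (subst nn_integral_multc) (measurable, simp add: Hs_FF)
  finally have "(\<integral>\<^sup>+\<xi>. (\<integral>\<^sup>+\<eta>. ennreal (G2 s \<alpha> M f1 f2 \<xi> \<eta>) \<partial>lborel)\<^sup>2 \<partial>lborel) \<le> Hs_sq s f1 * ennreal c * Hs_sq s f2"
    by (simp add: mult_right_mono)
  then show ?thesis unfolding c_def by (simp add: ac_simps)
qed

lemma MainH:
  assumes [measurable]: "f1 \<in> borel_measurable borel" "f2 \<in> borel_measurable borel" and s: "s \<ge> 0"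
  shows "Hs_sq s (T_KdV \<alpha> M f1 f2)
     \<le> ennreal ((2 * (2 powr s * (16 / 3)) + 2 * (16 powr s * (128 / 3))) * max M 0) * (Hs_sq s f1 * Hs_sq s f2)"
proof -
  let ?Q1 = "\<lambda>\<xi>. \<integral>\<^sup>+\<eta>. ennreal (G1 s \<alpha> M f1 f2 \<xi> \<eta>) \<partial>lborel"
  let ?Q2 = "\<lambda>\<xi>. \<integral>\<^sup>+\<eta>. ennreal (G2 s \<alpha> M f1 f2 \<xi> \<eta>) \<partial>lborel"
  define c1 where "c1 = 2 powr s * (16 / 3) * max M 0"
  define c2 where "c2 = 16 powr s * (128 / 3) * max M 0"
  have c1: "c1 \<ge> 0" and c2: "c2 \<ge> 0" unfolding c1_def c2_def by simp_all
  have Q: "ennreal ((FF s (T_KdV \<alpha> M f1 f2) \<xi>)\<^sup>2) \<le> (?Q1 \<xi> + ?Q2 \<xi>)\<^sup>2" for \<xi>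
  proof -
    have "ennreal ((FF s (T_KdV \<alpha> M f1 f2) \<xi>)\<^sup>2) = (ennreal (FF s (T_KdV \<alpha> M f1 f2) \<xi>))\<^sup>2"
      by (simp add: ennreal_power FF_nonneg)
    also have "\<dots> \<le> (\<integral>\<^sup>+\<eta>. ennreal (KK s \<xi> \<eta> * AA \<alpha> M \<xi> \<eta> * FF s f1 \<eta> * FF s f2 (\<xi> - \<eta>)) \<partial>lborel)\<^sup>2"
      by (intro power_mono P1) simp_all
    also have "(\<integral>\<^sup>+\<eta>. ennreal (KK s \<xi> \<eta> * AA \<alpha> M \<xi> \<eta> * FF s f1 \<eta> * FF s f2 (\<xi> - \<eta>)) \<partial>lborel)
        = (\<integral>\<^sup>+\<eta>. ennreal (G1 s \<alpha> M f1 f2 \<xi> \<eta>) + ennreal (G2 s \<alpha> M f1 f2 \<xi> \<eta>) \<partial>lborel)"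
      by (intro nn_integral_cong) (simp add: G_split G_nn)
    also have "\<dots> = ?Q1 \<xi> + ?Q2 \<xi>"
      by (rule nn_integral_add) measurable
    finally show ?thesis .
  qed
  have "Hs_sq s (T_KdV \<alpha> M f1 f2) \<le> (\<integral>\<^sup>+\<xi>. (?Q1 \<xi> + ?Q2 \<xi>)\<^sup>2 \<partial>lborel)"
    unfolding Hs_FF by (intro nn_integral_mono Q)
  also have "\<dots> \<le> (\<integral>\<^sup>+\<xi>. 2 * (?Q1 \<xi>)\<^sup>2 + 2 * (?Q2 \<xi>)\<^sup>2 \<partial>lborel)"
    by (intro nn_integral_mono ennreal_sq_add)
  also have "\<dots> = 2 * (\<integral>\<^sup>+\<xi>. (?Q1 \<xi>)\<^sup>2 \<partial>lborel) + 2 * (\<integral>\<^sup>+\<xi>. (?Q2 \<xi>)\<^sup>2 \<partial>lborel)"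
  proof -
    have a: "(\<integral>\<^sup>+\<xi>. 2 * (?Q1 \<xi>)\<^sup>2 + 2 * (?Q2 \<xi>)\<^sup>2 \<partial>lborel) = (\<integral>\<^sup>+\<xi>. 2 * (?Q1 \<xi>)\<^sup>2 \<partial>lborel) + (\<integral>\<^sup>+\<xi>. 2 * (?Q2 \<xi>)\<^sup>2 \<partial>lborel)"
      by (rule nn_integral_add) measurable
    have b: "(\<integral>\<^sup>+\<xi>. 2 * (?Q1 \<xi>)\<^sup>2 \<partial>lborel) = 2 * (\<integral>\<^sup>+\<xi>. (?Q1 \<xi>)\<^sup>2 \<partial>lborel)"
      by (rule nn_integral_cmult) measurable
    have c: "(\<integral>\<^sup>+\<xi>. 2 * (?Q2 \<xi>)\<^sup>2 \<partial>lborel) = 2 * (\<integral>\<^sup>+\<xi>. (?Q2 \<xi>)\<^sup>2 \<partial>lborel)"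
      by (rule nn_integral_cmult) measurable
    show ?thesis unfolding a b c ..
  qed
  also have "\<dots> \<le> 2 * (ennreal c1 * (Hs_sq s f1 * Hs_sq s f2)) + 2 * (ennreal c2 * (Hs_sq s f1 * Hs_sq s f2))"
    unfolding c1_def c2_def
    by (intro add_mono mult_left_mono I1_bound I2_bound s) simp_all
  also have "\<dots> = ennreal (2 * c1 + 2 * c2) * (Hs_sq s f1 * Hs_sq s f2)"
  proof -
    have "ennreal (2 * c1 + 2 * c2) = 2 * ennreal c1 + 2 * ennreal c2" using c1 c2 by (simp add: ennreal_mult')
    then show ?thesis by (simp add: distrib_right mult.assoc)
  qed
  also have "2 * c1 + 2 * c2 = (2 * (2 powr s * (16 / 3)) + 2 * (16 powr s * (128 / 3))) * max M 0"
    unfolding c1_def c2_def by (simp add: algebra_simps)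
  finally show ?thesis .
qed

lemma Tpt:
  assumes [measurable]: "f1 \<in> borel_measurable borel" "f2 \<in> borel_measurable borel" and s: "s \<ge> 0"
    and xi: "\<bar>\<xi>\<bar> \<le> 1"
    and h1: "Hs_sq s f1 = ennreal h1" "h1 \<ge> 0" and h2: "Hs_sq s f2 = ennreal h2" "h2 \<ge> 0"
  shows "cmod (T_KdV \<alpha> M f1 f2 \<xi>) \<le> sqrt (2 powr s) * sqrt h1 * sqrt h2"
proof -
  define b where "b = sqrt (2 powr s)"
  have b0: "b \<ge> 0" unfolding b_def by simp
  have kb: "KK s \<xi> \<eta> * AA \<alpha> M \<xi> \<eta> \<le> b" for \<eta>
  proof -
    have "(KK s \<xi> \<eta>)\<^sup>2 \<le> 2 powr s * \<xi>\<^sup>2" by (rule KB1[OF s])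
    also have "\<dots> \<le> 2 powr s * 1"
    proof (rule mult_left_mono)
      have "\<xi>\<^sup>2 = \<bar>\<xi>\<bar>\<^sup>2" by simp
      also have "\<dots> \<le> 1\<^sup>2" using xi by (intro power_mono) auto
      finally show "\<xi>\<^sup>2 \<le> 1" by simp
    qed simp
    finally have "KK s \<xi> \<eta> \<le> b" unfolding b_def using KK_nonneg[of s \<xi> \<eta>]
      by (simp add: real_le_rsqrt)
    then show ?thesis using AA_01[of \<alpha> M \<xi> \<eta>] b0 by auto
  qed
  have w1: "cmod (T_KdV \<alpha> M f1 f2 \<xi>) \<le> FF s (T_KdV \<alpha> M f1 f2) \<xi>"
  proof -
    have "1 \<le> sqrt (wt s \<xi>)" using wt_ge1[OF s, of \<xi>] by simp
    then show ?thesis unfolding FF_def by (simp add: mult_le_cancel_right1)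
  qed
  have "ennreal (cmod (T_KdV \<alpha> M f1 f2 \<xi>)) \<le> ennreal (FF s (T_KdV \<alpha> M f1 f2) \<xi>)"
    using w1 by (rule ennreal_leI)
  also have "\<dots> \<le> (\<integral>\<^sup>+\<eta>. ennreal (KK s \<xi> \<eta> * AA \<alpha> M \<xi> \<eta> * FF s f1 \<eta> * FF s f2 (\<xi> - \<eta>)) \<partial>lborel)"
    by (rule P1) simp_all
  also have "\<dots> \<le> (\<integral>\<^sup>+\<eta>. ennreal b * (ennreal (FF s f1 \<eta>) * ennreal (FF s f2 (\<xi> - \<eta>))) \<partial>lborel)"
  proof (rule nn_integral_mono)
    fix \<eta>
    have "KK s \<xi> \<eta> * AA \<alpha> M \<xi> \<eta> * FF s f1 \<eta> * FF s f2 (\<xi> - \<eta>) \<le> b * (FF s f1 \<eta> * FF s f2 (\<xi> - \<eta>))"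
      using mult_right_mono[OF kb[of \<eta>], of "FF s f1 \<eta> * FF s f2 (\<xi> - \<eta>)"] FF_nonneg[of s f1 \<eta>] FF_nonneg[of s f2 "\<xi> - \<eta>"]
      by (simp add: mult.assoc)
    then have "ennreal (KK s \<xi> \<eta> * AA \<alpha> M \<xi> \<eta> * FF s f1 \<eta> * FF s f2 (\<xi> - \<eta>)) \<le> ennreal (b * (FF s f1 \<eta> * FF s f2 (\<xi> - \<eta>)))"
      by (rule ennreal_leI)
    also have "\<dots> = ennreal b * (ennreal (FF s f1 \<eta>) * ennreal (FF s f2 (\<xi> - \<eta>)))"
      using b0 by (simp add: ennreal_mult' FF_nonneg)
    finally show "ennreal (KK s \<xi> \<eta> * AA \<alpha> M \<xi> \<eta> * FF s f1 \<eta> * FF s f2 (\<xi> - \<eta>)) \<le> ennreal b * (ennreal (FF s f1 \<eta>) * ennreal (FF s f2 (\<xi> - \<eta>)))" .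
  qed
  also have "\<dots> = ennreal b * (\<integral>\<^sup>+\<eta>. ennreal (FF s f1 \<eta>) * ennreal (FF s f2 (\<xi> - \<eta>)) \<partial>lborel)"
    by (rule nn_integral_cmult) measurable
  finally have le: "ennreal (cmod (T_KdV \<alpha> M f1 f2 \<xi>)) \<le> ennreal b * (\<integral>\<^sup>+\<eta>. ennreal (FF s f1 \<eta>) * ennreal (FF s f2 (\<xi> - \<eta>)) \<partial>lborel)" .
  have cs: "(\<integral>\<^sup>+\<eta>. ennreal (FF s f1 \<eta>) * ennreal (FF s f2 (\<xi> - \<eta>)) \<partial>lborel)\<^sup>2
      \<le> (\<integral>\<^sup>+\<eta>. (ennreal (FF s f1 \<eta>))\<^sup>2 \<partial>lborel) * (\<integral>\<^sup>+\<eta>. (ennreal (FF s f2 (\<xi> - \<eta>)))\<^sup>2 \<partial>lborel)"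
    by (rule Cauchy_Schwarz_nn_integral) measurable
  also have "\<dots> = Hs_sq s f1 * Hs_sq s f2"
    by (simp add: ennreal_power FF_nonneg Hs_refl Hs_FF[symmetric])
  finally have cs2: "(\<integral>\<^sup>+\<eta>. ennreal (FF s f1 \<eta>) * ennreal (FF s f2 (\<xi> - \<eta>)) \<partial>lborel)\<^sup>2 \<le> ennreal (h1 * h2)"
    using h1 h2 by (simp add: ennreal_mult')
  have "ennreal ((cmod (T_KdV \<alpha> M f1 f2 \<xi>))\<^sup>2) = (ennreal (cmod (T_KdV \<alpha> M f1 f2 \<xi>)))\<^sup>2"
    by (simp add: ennreal_power)
  also have "\<dots> \<le> (ennreal b * (\<integral>\<^sup>+\<eta>. ennreal (FF s f1 \<eta>) * ennreal (FF s f2 (\<xi> - \<eta>)) \<partial>lborel))\<^sup>2"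
    using le by (intro power_mono) simp_all
  also have "\<dots> = (ennreal b)\<^sup>2 * (\<integral>\<^sup>+\<eta>. ennreal (FF s f1 \<eta>) * ennreal (FF s f2 (\<xi> - \<eta>)) \<partial>lborel)\<^sup>2"
    by (simp add: power_mult_distrib)
  also have "\<dots> \<le> (ennreal b)\<^sup>2 * ennreal (h1 * h2)"
    using cs2 by (rule mult_left_mono) simp
  also have "\<dots> = ennreal (b\<^sup>2 * (h1 * h2))"
    using b0 h1 h2 by (simp add: ennreal_power ennreal_mult')
  finally have "(cmod (T_KdV \<alpha> M f1 f2 \<xi>))\<^sup>2 \<le> b\<^sup>2 * (h1 * h2)"
    using b0 h1 h2 by (subst (asm) ennreal_le_iff) simp_all
  then have "cmod (T_KdV \<alpha> M f1 f2 \<xi>) \<le> sqrt (b\<^sup>2 * (h1 * h2))"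
    by (simp add: real_le_rsqrt)
  also have "\<dots> = b * sqrt h1 * sqrt h2" using b0 by (simp add: real_sqrt_mult)
  finally show ?thesis unfolding b_def .
qed

lemma meas_T:
  assumes [measurable]: "f1 \<in> borel_measurable borel" "f2 \<in> borel_measurable borel"
  shows "T_KdV \<alpha> M f1 f2 \<in> borel_measurable lborel"
proof -
  have eq: "T_KdV \<alpha> M f1 f2 = (\<lambda>\<xi>. \<integral> \<xi>1. of_bool (\<bar>3 * \<xi> * \<xi>1 * (\<xi> - \<xi>1) - \<alpha>\<bar> < M) *\<^sub>R
              (complex_of_real \<xi> * f1 \<xi>1 * f2 (\<xi> - \<xi>1)) \<partial>lborel)"
    unfolding T_KdV_def by (auto simp: indicator_def)
  show ?thesis unfolding eq
    by (rule lborel.borel_measurable_lebesgue_integral) measurable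
qed

lemma sqrt_max_le: "sqrt (max M 0) \<le> (1 + M\<^sup>2) powr (1/4)"
proof -
  have "max M 0 \<le> sqrt (1 + M\<^sup>2)"
    by (rule real_le_rsqrt) (auto simp: max_def)
  then have "sqrt (max M 0) \<le> sqrt (sqrt (1 + M\<^sup>2))" by simp
  also have "sqrt (sqrt (1 + M\<^sup>2)) = (1 + M\<^sup>2) powr (1/4)"
  proof -
    have p: "1 + M\<^sup>2 > 0" by (smt (verit) zero_le_power2)
    have "sqrt (sqrt (1 + M\<^sup>2)) = ((1 + M\<^sup>2) powr (1/2)) powr (1/2)"
      using p by (simp add: powr_half_sqrt)
    also have "\<dots> = (1 + M\<^sup>2) powr (1/4)" by (simp add: powr_powr)
    finally show ?thesis .
  qed
  finally show ?thesis .
qed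

theorem lemma8:
  fixes s \<epsilon> \<rho> lam \<sigma> :: real
  assumes "s > 0" and "0 < \<epsilon>" and "\<epsilon> < min s 1"
    and "\<rho> > 1" and "lam > 1" and "1/2 < \<sigma>" and "\<sigma> < 1"
    and "1 - \<sigma> = 1 / \<rho> + 1 / lam"
    and "\<rho> * (2 * \<sigma> - 1 - \<epsilon>) > 1"
    and "s < 1 \<longrightarrow> lam \<le> 2 / (1 - s)"
  shows "\<exists>C. \<forall>\<alpha> M :: real. \<forall>f1 f2 :: real \<Rightarrow> complex.
           in_calH s lam f1 \<and> in_calH s lam f2 \<longrightarrow>
             in_calH s lam (T_KdV \<alpha> M f1 f2) \<and>
             calH_norm s lam (T_KdV \<alpha> M f1 f2)
               \<le> C * (1 + M\<^sup>2) powr (1/4) * calH_norm s lam f1 * calH_norm s lam f2"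
proof -
  have s: "s \<ge> 0" using assms(1) by simp
  have lam: "lam > 1" by fact
  define C0 where "C0 = 2 * (2 powr s * (16 / 3)) + 2 * (16 powr s * (128 / 3))"
  have C0: "C0 \<ge> 0" unfolding C0_def by simp
  define C where "C = sqrt C0 + 2 * sqrt (2 powr s)"
  show ?thesis
  proof (intro exI[of _ C] allI impI, elim conjE)
    fix \<alpha> M :: real and f1 f2 :: "real \<Rightarrow> complex"
    assume in1: "in_calH s lam f1" and in2: "in_calH s lam f2"
    have m12[measurable]: "f1 \<in> borel_measurable borel" "f2 \<in> borel_measurable borel"
      using in1 in2 unfolding in_calH_def by auto
    define h1 where "h1 = enn2real (Hs_sq s f1)"
    define h2 where "h2 = enn2real (Hs_sq s f2)"
    have H1: "Hs_sq s f1 = ennreal h1" "h1 \<ge> 0"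
      using in1 unfolding in_calH_def h1_def by (auto simp: ennreal_enn2real)
    have H2: "Hs_sq s f2 = ennreal h2" "h2 \<ge> 0"
      using in2 unfolding in_calH_def h2_def by (auto simp: ennreal_enn2real)
    define T where "T = T_KdV \<alpha> M f1 f2"
    define P where "P = (1 + M\<^sup>2) powr (1/4)"
    have P1: "P \<ge> 1" unfolding P_def by (simp add: ge_one_powr_ge_zero)
    define S where "S = sqrt h1 * sqrt h2"
    have S0: "S \<ge> 0" unfolding S_def using H1 H2 by simp
    define B where "B = sqrt (2 powr s) * sqrt h1 * sqrt h2"
    have B0: "B \<ge> 0" unfolding B_def using H1 H2 by simp
    have B_S: "B = sqrt (2 powr s) * S" unfolding B_def S_def by simp
    have HT: "Hs_sq s T \<le> ennreal (C0 * max M 0 * h1 * h2)"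
    proof -
      have "Hs_sq s T \<le> ennreal (C0 * max M 0) * (Hs_sq s f1 * Hs_sq s f2)"
        unfolding T_def C0_def by (rule MainH[OF _ _ s]) measurable
      also have "\<dots> = ennreal (C0 * max M 0 * h1 * h2)"
        using H1 H2 C0 by (simp add: ennreal_mult' mult.assoc)
      finally show ?thesis .
    qed
    then have HT_fin: "Hs_sq s T < \<infinity>" by (rule le_less_trans) simp
    have hT: "enn2real (Hs_sq s T) \<le> C0 * max M 0 * h1 * h2"
      using enn2real_mono[OF HT] H1 H2 C0 by simp
    have sqH: "sqrt (enn2real (Hs_sq s T)) \<le> sqrt C0 * P * S"
    proof -
      have "sqrt (enn2real (Hs_sq s T)) \<le> sqrt (C0 * max M 0 * h1 * h2)"
        using hT by simp
      also have "\<dots> = sqrt C0 * sqrt (max M 0) * S" unfolding S_def by (simp add: real_sqrt_mult)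
      also have "\<dots> \<le> sqrt C0 * P * S"
        unfolding P_def using sqrt_max_le[of M] S0 C0 by (intro mult_right_mono mult_left_mono) simp_all
      finally show ?thesis .
    qed
    have LT: "Llam_pow lam T \<le> ennreal (B powr lam * 2)"
    proof -
      have "Llam_pow lam T \<le> (\<integral>\<^sup>+(\<xi>::real). ennreal (B powr lam) * indicator {-1<..<1} \<xi> \<partial>lborel)"
        unfolding Llam_pow_def
      proof (rule nn_integral_mono)
        fix \<xi> :: real
        show "ennreal (cmod (T \<xi>) powr lam) * indicator {-1<..<1} \<xi> \<le> ennreal (B powr lam) * indicator {-1<..<1} \<xi>"
        proof (cases "\<xi> \<in> {-1<..<1}")
          case True
          then have "\<bar>\<xi>\<bar> \<le> 1" by auto
          then have "cmod (T \<xi>) \<le> B" unfolding T_def B_def by (rule Tpt[OF m12 s _ H1 H2])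
          then have "cmod (T \<xi>) powr lam \<le> B powr lam" using lam by (intro powr_mono2) auto
          then show ?thesis using True by (simp add: ennreal_leI)
        qed simp
      qed
      also have "\<dots> = ennreal (B powr lam) * 2" by (simp add: nn_integral_cmult_indicator)
      also have "\<dots> = ennreal (B powr lam * 2)" by (simp add: ennreal_mult')
      finally show ?thesis .
    qed
    then have LT_fin: "Llam_pow lam T < \<infinity>" by (rule le_less_trans) simp
    have lT: "enn2real (Llam_pow lam T) \<le> B powr lam * 2"
      using enn2real_mono[OF LT] by simp
    have sqL: "(enn2real (Llam_pow lam T)) powr (1 / lam) \<le> 2 * B"
    proof -
      have "(enn2real (Llam_pow lam T)) powr (1 / lam) \<le> (B powr lam * 2) powr (1 / lam)"
        using lT lam by (intro powr_mono2) auto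
      also have "\<dots> = B * 2 powr (1 / lam)"
        using B0 lam by (simp add: powr_mult powr_powr)
      also have "\<dots> \<le> B * 2"
      proof (rule mult_left_mono)
        have "2 powr (1 / lam) \<le> 2 powr 1" using lam by (intro powr_mono) auto
        then show "2 powr (1 / lam) \<le> 2" by simp
      qed (rule B0)
      finally show ?thesis by simp
    qed
    have inT: "in_calH s lam T"
      unfolding in_calH_def using HT_fin LT_fin unfolding T_def using meas_T[OF m12, of \<alpha> M] by auto
    have n1: "sqrt h1 \<le> calH_norm s lam f1" unfolding calH_norm_def h1_def by simp
    have n2: "sqrt h2 \<le> calH_norm s lam f2" unfolding calH_norm_def h2_def by simp
    have "calH_norm s lam T \<le> sqrt C0 * P * S + 2 * B"
      unfolding calH_norm_def using sqH sqL by linarith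
    also have "\<dots> = sqrt C0 * P * S + 2 * sqrt (2 powr s) * S" unfolding B_S by simp
    also have "\<dots> \<le> sqrt C0 * P * S + 2 * sqrt (2 powr s) * P * S"
    proof -
      have "2 * sqrt (2 powr s) * S * 1 \<le> 2 * sqrt (2 powr s) * S * P"
        using P1 S0 by (intro mult_left_mono) simp_all
      then show ?thesis by (simp add: ac_simps)
    qed
    also have "\<dots> = C * P * S" unfolding C_def by (simp add: algebra_simps)
    also have "\<dots> \<le> C * P * (calH_norm s lam f1 * calH_norm s lam f2)"
      unfolding S_def
    proof (rule mult_left_mono)
      show "sqrt h1 * sqrt h2 \<le> calH_norm s lam f1 * calH_norm s lam f2"
        using n1 n2 H1 H2 by (intro mult_mono) (auto intro: order_trans[OF real_sqrt_ge_zero])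
      show "0 \<le> C * P" unfolding C_def using C0 P1 by simp
    qed
    finally have "calH_norm s lam T \<le> C * P * calH_norm s lam f1 * calH_norm s lam f2"
      by (simp add: mult.assoc)
    then show "in_calH s lam (T_KdV \<alpha> M f1 f2) \<and>
         calH_norm s lam (T_KdV \<alpha> M f1 f2) \<le> C * (1 + M\<^sup>2) powr (1/4) * calH_norm s lam f1 * calH_norm s lam f2"
      using inT unfolding T_def P_def by simp
  qed
qed

end
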